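(* Let $n\in\mathbf{N}$ and $A\subset[n]$ have property P, with $Z^{1(2)}_{(\frac29,\frac13]}$, $Z_B$, $Z_G$, $Z_{(\frac13,\frac12]}$ as in the context. Define $$B_3=2\cdot\big(Z^{1(2)}_{(\frac29,\frac13]}\cup Z_B\cup Z_G\big)\ \cup\ Z_{(\frac13,\frac12]}\ \cup\ \tfrac94\cdot Z_B\ \cup\ \big(A\cap(\tfrac n2,\tfrac{2n}{3}]\big),$$ and $A'''=\{m\in\mathbf{N}:3m\in A_{(\frac12,1]}+A_{(\frac12,1]}\}$ where $A_{(\frac12,1]}=A\cap(\frac n2,n]$. Then $B_3$ is a set of integers contained in $(\frac n3,\frac{2n}{3}]$, $|B_3|=\left|A\cap[1,\frac{2n}{3}]\right|+|Z_B|$, and $B_3\cap A'''=\emptyset$.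
   Context: A set $A\subset\mathbf{N}$ has property P if there are no $x,y,z\in A$ (not necessarily distinct $x,y$) with $z<x$, $z<y$ and $z\mid x+y$. Intervals denote sets of integers. For $a\in A\cap[1,\frac n2]$ let $m_a\geqslant0$ be the unique integer with $3^{m_a}a\in(\frac n6,\frac n2]$. Define $Z=\{3^{m_a}a: a\in A\cap[1,\frac n2],\ 3^{m_a}a\in(\frac{2n}{9},\frac n2]\}\cup\{2\cdot3^{m_a}a: a\in A\cap[1,\frac n2],\ 3^{m_a}a\in(\frac n6,\frac{2n}{9}]\}$. Let $Z^{1(2)}_{(\frac29,\frac13]}=Z\cap(\frac{2n}{9},\frac n3]\cap(1+2\mathbf{Z})$; $Z_B=\{z\in Z\cap(\frac{2n}{9},\frac n3]\cap2\mathbf{Z}:\frac{3z}{2}\in Z\}$; $Z_G=\{z\in Z\cap(\frac{2n}{9},\frac n3]\cap2\mathbf{Z}:\frac{3z}{2}\notin Z\}$; $Z_{(\frac13,\frac12]}=Z\cap(\frac n3,\frac n2]$. *)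

theory Defs
  imports Complex_Main
begin

definition propP :: "nat set \<Rightarrow> bool" where
  "propP A \<longleftrightarrow> (\<forall>x\<in>A. \<forall>y\<in>A. \<forall>z\<in>A. z < x \<and> z < y \<longrightarrow> \<not> z dvd (x + y))"

definition mexp :: "nat \<Rightarrow> nat \<Rightarrow> nat" where
  "mexp n a = (THE m. real n / 6 < real (3 ^ m * a) \<and> real (3 ^ m * a) \<le> real n / 2)"

definition Zset :: "nat \<Rightarrow> nat set \<Rightarrow> nat set" where
  "Zset n A =
     {3 ^ mexp n a * a | a. a \<in> A \<and> 1 \<le> a \<and> real a \<le> real n / 2
                          \<and> 2 * real n / 9 < real (3 ^ mexp n a * a) \<and> real (3 ^ mexp n a * a) \<le> real n / 2}
   \<union> {2 * (3 ^ mexp n a * a) | a. a \<in> A \<and> 1 \<le> a \<and> real a \<le> real n / 2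
                          \<and> real n / 6 < real (3 ^ mexp n a * a) \<and> real (3 ^ mexp n a * a) \<le> 2 * real n / 9}"

definition Zodd :: "nat \<Rightarrow> nat set \<Rightarrow> nat set" where
  "Zodd n A = {z \<in> Zset n A. 2 * real n / 9 < real z \<and> real z \<le> real n / 3 \<and> odd z}"

definition ZB :: "nat \<Rightarrow> nat set \<Rightarrow> nat set" where
  "ZB n A = {z \<in> Zset n A. 2 * real n / 9 < real z \<and> real z \<le> real n / 3 \<and> even z
                \<and> 3 * z div 2 \<in> Zset n A}"

definition ZG :: "nat \<Rightarrow> nat set \<Rightarrow> nat set" where
  "ZG n A = {z \<in> Zset n A. 2 * real n / 9 < real z \<and> real z \<le> real n / 3 \<and> even z
                \<and> 3 * z div 2 \<notin> Zset n A}"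

definition Zhalf :: "nat \<Rightarrow> nat set \<Rightarrow> nat set" where
  "Zhalf n A = {z \<in> Zset n A. real n / 3 < real z \<and> real z \<le> real n / 2}"

definition B3 :: "nat \<Rightarrow> nat set \<Rightarrow> real set" where
  "B3 n A = (\<lambda>z. 2 * real z) ` (Zodd n A \<union> ZB n A \<union> ZG n A)
          \<union> real ` Zhalf n A
          \<union> (\<lambda>z. 9 / 4 * real z) ` ZB n A
          \<union> real ` {a \<in> A. real n / 2 < real a \<and> real a \<le> 2 * real n / 3}"

definition Aupper :: "nat \<Rightarrow> nat set \<Rightarrow> nat set" where
  "Aupper n A = {a \<in> A. real n / 2 < real a \<and> a \<le> n}"

definition A3 :: "nat \<Rightarrow> nat set \<Rightarrow> nat set" where
  "A3 n A = {m. \<exists>x\<in>Aupper n A. \<exists>y\<in>Aupper n A. 3 * m = x + y}"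

end

theory Submission
  imports Defs
begin

lemma r1: "real a \<le> real n / 2 \<longleftrightarrow> 2*a \<le> n" by (simp add: field_simps) linarith
lemma r2: "2 * real n / 9 < real x \<longleftrightarrow> 2*n < 9*x" by (simp add: field_simps) linarith
lemma r4: "real n / 6 < real x \<longleftrightarrow> n < 6*x" by (simp add: field_simps) linarith
lemma r5: "real x \<le> 2 * real n / 9 \<longleftrightarrow> 9*x \<le> 2*n" by (simp add: field_simps) linarith
lemma r6: "real x \<le> real n / 3 \<longleftrightarrow> 3*x \<le> n" by (simp add: field_simps) linarith
lemma r7: "real n / 3 < real x \<longleftrightarrow> n < 3*x" by (simp add: field_simps) linarith
lemma r8: "real n / 2 < real x \<longleftrightarrow> n < 2*x" by (simp add: field_simps) linarith
lemma r9: "real x \<le> 2 * real n / 3 \<longleftrightarrow> 3*x \<le> 2*n" by (simp add: field_simps) linarith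

lemma baseP: assumes "propP A" "b\<in>A" "c\<in>A" "b<c" "b dvd 2*c" shows False
proof -
  have "\<not> b dvd c + c" using assms(1-4) unfolding propP_def by blast
  thus False using assms(5) by (simp add: mult_2)
qed

lemma L: assumes "propP A" "a\<in>A" "b\<in>A" "1\<le>a" "1\<le>b" shows "3^i*a \<noteq> 2*3^j*(b::nat)"
proof
  assume eq: "3^i*a = 2*3^j*b"
  show False
  proof (cases "i \<le> j")
    case True
    then obtain k where k: "j = i+k" using le_Suc_ex by blast
    have "3^i*a = 3^i*(2*3^k*b)" using eq k by (simp add: power_add ac_simps)
    hence a: "a = 2*3^k*b" by simp
    have "b dvd 2*a" using a by simp
    moreover have "b < a" proof -
      have "2*1*b \<le> 2*3^k*b" by (intro mult_le_mono1 mult_le_mono2) simp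
      thus ?thesis using a assms(5) by linarith
    qed
    ultimately show False using baseP[OF assms(1,3,2)] by blast
  next
    case False
    then obtain k where k: "i = j + Suc k" by (metis add_Suc_right leI less_imp_Suc_add)
    have "3^j*(3^Suc k*a) = 3^j*(2*b)" using eq k by (simp add: power_add ac_simps)
    hence a: "3^Suc k*a = 2*b" by (metis mult_left_cancel power_not_zero zero_neq_numeral)
    have "a dvd 2*b" using a by (metis dvd_triv_right)
    moreover have "3*a \<le> 3^Suc k*a" by (simp add: mult_le_mono1)
    hence "a < b" using a assms(4) by linarith
    ultimately show False using baseP[OF assms(1,2,3)] by blast
  qed
qed

lemma L0: assumes "propP A" "a\<in>A" "b\<in>A" "1\<le>a" "1\<le>b" "3^i*a = 3^j*(b::nat)" shows "a = b"
proof -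
  have *: False if "propP A" "a\<in>A" "b\<in>A" "1\<le>b" "3^i*a = 3^j*(b::nat)" "i<j" for a b i j
  proof -
    obtain k where k: "j = i+Suc k" using \<open>i<j\<close> by (metis add_Suc_right less_imp_Suc_add)
    have "3^i*a = 3^i*(3^Suc k*b)" using that(5) k by (simp add: power_add ac_simps)
    hence a: "a = 3^Suc k*b" by simp
    have "b dvd 2*a" using a by simp
    moreover have "3*b \<le> a" using a by (simp add: mult_le_mono1)
    hence "b < a" using that(4) by linarith
    ultimately show False using baseP[OF that(1,3,2)] by blast
  qed
  consider "i<j" | "j<i" | "i=j" by linarith
  thus ?thesis
  proof cases
    case 1 thus ?thesis using *[OF assms(1,2,3,5,6)] by blast
  next
    case 2 thus ?thesis using *[OF assms(1,3,2,4) assms(6)[symmetric]] by blast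
  next
    case 3 thus ?thesis using assms(6) by simp
  qed
qed

lemma mexp_ex: "1\<le>a \<Longrightarrow> 2*a\<le>n \<Longrightarrow> \<exists>m. n < 6*(3^m*a) \<and> 2*(3^m*a) \<le> (n::nat)"
proof (induction "n - 2*a" arbitrary: a rule: less_induct)
  case less
  show ?case
  proof (cases "n < 6*a")
    case True thus ?thesis using less.prems by (intro exI[of _ 0]) simp
  next
    case False
    have "n - 2*(3*a) < n - 2*a" using False less.prems by linarith
    then obtain m where "n < 6*(3^m*(3*a)) \<and> 2*(3^m*(3*a)) \<le> n"
      using less.hyps[of "3*a"] less.prems False by fastforce
    thus ?thesis by (intro exI[of _ "Suc m"]) (simp add: ac_simps)
  qed
qed

lemma mexp_prop: assumes "1\<le>a" "2*a\<le>n" shows "n < 6*(3^mexp n a*a) \<and> 2*(3^mexp n a*a) \<le> n"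
proof -
  let ?P = "\<lambda>m. n < 6*(3^m*a) \<and> 2*(3^m*a) \<le> n"
  have u: "m = m'" if "?P m" "?P m'" for m m'
  proof (rule ccontr)
    have w: False if "?P m" "?P m'" "m < m'" for m m'
    proof -
      have "3^Suc m \<le> (3::nat)^m'" using that(3) by (intro power_increasing) auto
      hence "3^Suc m * a \<le> 3^m'*a" by (rule mult_le_mono1)
      hence "3*(3^m*a) \<le> 3^m'*a" by simp
      thus False using that(1,2) by linarith
    qed
    assume "m \<noteq> m'" thus False using w that by (metis linorder_neqE_nat)
  qed
  have "\<exists>!m. ?P m" using mexp_ex[OF assms] u by blast
  hence "?P (THE m. ?P m)" by (rule theI')
  moreover have "mexp n a = (THE m. ?P m)" unfolding mexp_def r4 r1[symmetric]
    by (simp add: mult.commute)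
  ultimately show ?thesis by simp
qed

definition hh :: "nat \<Rightarrow> nat \<Rightarrow> nat" where
  "hh n a = (if 2*n < 9*(3^mexp n a*a) then 3^mexp n a*a else 2*(3^mexp n a*a))"

lemma zmem: assumes "z \<in> Zset n A"
  shows "\<exists>a e. a\<in>A \<and> 1\<le>a \<and> 2*a\<le>n \<and> ((z = 3^e*a \<and> 2*n<9*z \<and> 2*z\<le>n) \<or> (z = 2*(3^e*a) \<and> n<3*z \<and> 9*z\<le>4*n))"
  using assms unfolding Zset_def r1 r2 r4 r5
proof (elim UnE CollectE exE conjE)
  fix a assume *: "z = 3 ^ mexp n a * a" "a \<in> A" "1 \<le> a" "2 * a \<le> n"
    "2 * n < 9 * (3 ^ mexp n a * a)" "2 * (3 ^ mexp n a * a) \<le> n"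
  thus ?thesis by blast
next
  fix a assume *: "z = 2 * (3 ^ mexp n a * a)" "a \<in> A" "1 \<le> a" "2 * a \<le> n"
    "n < 6 * (3 ^ mexp n a * a)" "9 * (3 ^ mexp n a * a) \<le> 2 * n"
  hence "n<3*z \<and> 9*z\<le>4*n" by linarith
  thus ?thesis using * by blast
qed

lemma Zset_h: "Zset n A = hh n ` {a\<in>A. 1\<le>a \<and> 2*a\<le>n}"
proof (rule set_eqI)
  fix z
  show "z \<in> Zset n A \<longleftrightarrow> z \<in> hh n ` {a\<in>A. 1\<le>a \<and> 2*a\<le>n}"
  proof
    assume "z \<in> Zset n A"
    thus "z \<in> hh n ` {a\<in>A. 1\<le>a \<and> 2*a\<le>n}"
      unfolding Zset_def r1 r2 r4 r5 by (auto simp: hh_def image_iff)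
  next
    assume "z \<in> hh n ` {a\<in>A. 1\<le>a \<and> 2*a\<le>n}"
    then obtain a where a: "a\<in>A" "1\<le>a" "2*a\<le>n" "z = hh n a" by blast
    note m = mexp_prop[OF a(2,3)]
    show "z \<in> Zset n A"
    proof (cases "2*n < 9*(3^mexp n a*a)")
      case True
      thus ?thesis unfolding Zset_def r1 r2 r4 r5 using a m by (auto simp: hh_def)
    next
      case False
      thus ?thesis unfolding Zset_def r1 r2 r4 r5 using a m by (auto simp: hh_def)
    qed
  qed
qed

lemma hh_inj: assumes "propP A" shows "inj_on (hh n) {a\<in>A. 1\<le>a \<and> 2*a\<le>n}"
proof (rule inj_onI)
  fix a b assume a: "a \<in> {a\<in>A. 1\<le>a \<and> 2*a\<le>n}" and b: "b \<in> {a\<in>A. 1\<le>a \<and> 2*a\<le>n}"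
    and eq: "hh n a = hh n b"
  have A: "a\<in>A" "1\<le>a" "b\<in>A" "1\<le>b" using a b by auto
  note L1 = L[OF assms A(1,3,2,4)] and L2 = L[OF assms A(3,1,4,2)]
  note M = L0[OF assms A(1,3,2,4)]
  show "a = b"
    using eq L1[of "mexp n a" "mexp n b"] L2[of "mexp n b" "mexp n a"]
      M[of "mexp n a" "mexp n b"]
    unfolding hh_def by (auto split: if_splits simp: ac_simps)
qed

lemma ZBmem: assumes "propP A" "z \<in> ZB n A"
  shows "4 dvd z \<and> z \<in> Zset n A \<and> 2*n < 9*z \<and> 27*z \<le> 8*n
     \<and> (\<exists>b f. b\<in>A \<and> 1\<le>b \<and> 2*b\<le>n \<and> 9*z div 4 = 3^Suc f*b)"
proof -
  have z: "z \<in> Zset n A" "2*n<9*z" "3*z\<le>n" "even z" "3*z div 2 \<in> Zset n A"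
    using assms(2) unfolding ZB_def r2 r6 by auto
  obtain a e where a: "a\<in>A" "1\<le>a" "2*a\<le>n"
    "(z = 3^e*a \<and> 2*n<9*z \<and> 2*z\<le>n) \<or> (z = 2*(3^e*a) \<and> n<3*z \<and> 9*z\<le>4*n)"
    using zmem[OF z(1)] by blast
  have za: "z = 3^e*a" using a(4) z(3) by linarith
  define w where "w = 3*z div 2"
  have w2: "2*w = 3*z" using z(4) unfolding w_def by auto
  obtain b f where b: "b\<in>A" "1\<le>b" "2*b\<le>n"
    "(w = 3^f*b \<and> 2*n<9*w \<and> 2*w\<le>n) \<or> (w = 2*(3^f*b) \<and> n<3*w \<and> 9*w\<le>4*n)"
    using zmem[OF z(5)] unfolding w_def[symmetric] by blast
  have ne: "3^Suc e*a \<noteq> 2*3^f*b" by (rule L[OF assms(1) a(1) b(1) a(2) b(2)])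
  have wb: "w = 2*(3^f*b)" "9*w\<le>4*n"
  proof -
    have "w \<noteq> 3^f*b"
    proof
      assume "w = 3^f*b"
      hence "3^Suc e*a = 2*3^f*b" using w2 za by simp
      thus False using ne by blast
    qed
    thus "w = 2*(3^f*b)" "9*w\<le>4*n" using b(4) by auto
  qed
  define c where "c = 3^f*b"
  have zc: "3*z = 4*c" using w2 wb(1) unfolding c_def by linarith
  have d4: "4 dvd z" using zc by presburger
  have "9*z div 4 = 3*c" using zc d4 by presburger
  hence "9*z div 4 = 3^Suc f*b" unfolding c_def by simp
  moreover have "27*z \<le> 8*n" using zc wb unfolding c_def by linarith
  ultimately show ?thesis using d4 z(1,2) b(1-3) by blast
qed

theorem mainTheorem17:
  fixes n :: nat and A :: "nat set"
  assumes "A \<subseteq> {1..n}" and "propP A"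
  shows "B3 n A \<subseteq> \<int>
    \<and> B3 n A \<subseteq> {real n / 3 <.. 2 * real n / 3}
    \<and> card (B3 n A) = card {a \<in> A. 1 \<le> a \<and> real a \<le> 2 * real n / 3} + card (ZB n A)
    \<and> B3 n A \<inter> real ` A3 n A = {}"
proof -
  note P = assms(2)
  define D where "D = {a\<in>A. 1\<le>a \<and> 2*a\<le>n}"
  define Z where "Z = Zset n A"
  define S1 where "S1 = {z\<in>Z. 2*n<9*z \<and> 3*z\<le>n}"
  define H where "H = {z\<in>Z. n<3*z \<and> 2*z\<le>n}"
  define ZBn where "ZBn = ZB n A"
  define A4 where "A4 = {a\<in>A. n<2*a \<and> 3*a\<le>2*n}"
  define T1 where "T1 = (\<lambda>z. 2*z) ` S1"
  define T3 where "T3 = (\<lambda>z. 9*z div 4) ` ZBn"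
  define N where "N = T1 \<union> H \<union> T3 \<union> A4"
  have ZBsub: "ZBn \<subseteq> Z" unfolding ZBn_def Z_def ZB_def by auto
  have e1: "Zodd n A \<union> ZB n A \<union> ZG n A = S1"
    unfolding Zodd_def ZB_def ZG_def S1_def Z_def r2 r6 by auto
  have e2: "Zhalf n A = H" unfolding Zhalf_def H_def Z_def r7 r1 by auto
  have e3: "{a \<in> A. real n / 2 < real a \<and> real a \<le> 2 * real n / 3} = A4"
    unfolding A4_def r8 r9 by auto
  have e4: "(\<lambda>z. 9 / 4 * real z) ` ZB n A = real ` T3"
  proof -
    have "(\<lambda>z. 9 / 4 * real z) ` ZB n A = (\<lambda>z. real (9*z div 4)) ` ZB n A"
    proof (rule image_cong[OF refl])
      fix z assume "z \<in> ZB n A"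
      then obtain k where "z = 4*k" using ZBmem[OF P] by blast
      thus "9 / 4 * real z = real (9*z div 4)" by simp
    qed
    thus ?thesis unfolding T3_def ZBn_def image_image .
  qed
  have e5: "(\<lambda>z. 2 * real z) ` S1 = real ` T1" unfolding T1_def image_image by simp
  have hB3: "B3 n A = real ` N"
    unfolding B3_def e1 e2 e3 e4 e5 N_def image_Un by simp

  have fT1: "\<exists>a e. a\<in>A \<and> 1\<le>a \<and> 2*a\<le>n \<and> t = 2*(3^e*a) \<and> 4*n<9*t \<and> 3*t\<le>2*n" if tt: "t \<in> T1" for t
  proof -
    obtain z where z: "z \<in> S1" "t = 2*z" using tt unfolding T1_def by blast
    have zz: "z \<in> Zset n A" "2*n<9*z" "3*z\<le>n" using z(1) unfolding S1_def Z_def by auto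
    obtain a e where a: "a\<in>A" "1\<le>a" "2*a\<le>n"
      "(z = 3^e*a \<and> 2*n<9*z \<and> 2*z\<le>n) \<or> (z = 2*(3^e*a) \<and> n<3*z \<and> 9*z\<le>4*n)"
      using zmem[OF zz(1)] by blast
    have ze: "z = 3^e*a" using a(4) zz(3) by linarith
    have "4*n<9*t \<and> 3*t\<le>2*n" using z(2) zz(2,3) by linarith
    thus ?thesis using a(1-3) z(2) ze by blast
  qed
  have fH: "t \<in> Z \<and> n<3*t \<and> 2*t\<le>n" if "t \<in> H" for t using that unfolding H_def by auto
  have fT3: "\<exists>b f. b\<in>A \<and> 1\<le>b \<and> 2*b\<le>n \<and> t = 3^Suc f*b \<and> n<2*t \<and> 3*t\<le>2*n" if tt: "t \<in> T3" for t
  proof -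
    obtain z where z: "z \<in> ZBn" "t = 9*z div 4" using tt unfolding T3_def by blast
    have zz: "4 dvd z" "2*n < 9*z" "27*z \<le> 8*n"
      "\<exists>b f. b\<in>A \<and> 1\<le>b \<and> 2*b\<le>n \<and> 9*z div 4 = 3^Suc f*b"
      using ZBmem[OF P z(1)[unfolded ZBn_def]] by auto
    have "n<2*t \<and> 3*t\<le>2*n" using zz(1-3) z(2) by auto
    thus ?thesis using zz(4) z(2) by auto
  qed
  have fA4: "t\<in>A \<and> n<2*t \<and> 3*t\<le>2*n" if "t \<in> A4" for t using that unfolding A4_def by auto
  have fZ: "\<exists>a e. a\<in>A \<and> 1\<le>a \<and> 2*a\<le>n \<and> ((t = 3^e*a \<and> 2*n<9*t \<and> 2*t\<le>n) \<or> (t = 2*(3^e*a) \<and> n<3*t \<and> 9*t\<le>4*n))"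
    if "t \<in> Z" for t using zmem that unfolding Z_def by blast

  have range: "n < 3*t \<and> 3*t \<le> 2*n" if tN: "t \<in> N" for t
  proof -
    consider "t \<in> T1" | "t \<in> H" | "t \<in> T3" | "t \<in> A4" using tN unfolding N_def by blast
    thus ?thesis
    proof cases
      case 1
      from fT1[OF 1] have "4*n<9*t" "3*t\<le>2*n" by blast+
      thus ?thesis by linarith
    next
      case 2 thus ?thesis using fH[OF 2] by linarith
    next
      case 3
      from fT3[OF 3] have "n<2*t" "3*t\<le>2*n" by blast+
      thus ?thesis by linarith
    next
      case 4 thus ?thesis using fA4[OF 4] by linarith
    qed
  qed

  have i1: "B3 n A \<subseteq> \<int>" unfolding hB3 by auto
  have i2: "B3 n A \<subseteq> {real n / 3 <.. 2 * real n / 3}"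
  proof
    fix x assume "x \<in> B3 n A"
    then obtain t where t: "t \<in> N" "x = real t" unfolding hB3 by blast
    show "x \<in> {real n / 3 <.. 2 * real n / 3}"
      unfolding greaterThanAtMost_iff t(2) r7 r9 using range[OF t(1)] by simp
  qed
  have fin_fD: "finite D" using assms(1) finite_subset[of D "{1..n}"] unfolding D_def by auto
  have ZD: "Z = hh n ` D" unfolding Z_def D_def by (rule Zset_h)
  have fin_fZf: "finite Z" using fin_fD ZD by simp
  have fin_fS1: "finite S1" using fin_fZf unfolding S1_def by simp
  have fin_fH: "finite H" using fin_fZf unfolding H_def by simp
  have fin_fZB: "finite ZBn" using fin_fZf ZBsub finite_subset by blast
  have fin_fA: "finite A" using assms(1) finite_subset by blast
  have fin_fA4: "finite A4" using fin_fA unfolding A4_def by simp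
  have fin_fT1: "finite T1" using fin_fS1 unfolding T1_def by simp
  have fin_fT3: "finite T3" using fin_fZB unfolding T3_def by simp
  have d12: "T1 \<inter> H = {}"
  proof (rule ccontr)
    assume "T1 \<inter> H \<noteq> {}"
    then obtain t where t: "t \<in> T1" "t \<in> H" by blast
    obtain a e where a: "a\<in>A" "1\<le>a" "2*a\<le>n" "t = 2*(3^e*a)" "4*n<9*t" "3*t\<le>2*n"
      using fT1[OF t(1)] by blast
    obtain b f where b: "b\<in>A" "1\<le>b" "2*b\<le>n"
      "(t = 3^f*b \<and> 2*n<9*t \<and> 2*t\<le>n) \<or> (t = 2*(3^f*b) \<and> n<3*t \<and> 9*t\<le>4*n)"
      using fZ fH[OF t(2)] by blast
    have ne: "3^f*b \<noteq> 2*3^e*a" by (rule L[OF P b(1) a(1) b(2) a(2)])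
    from b(4) show False
    proof
      assume "t = 3^f*b \<and> 2*n<9*t \<and> 2*t\<le>n"
      hence "3^f*b = 2*3^e*a" using a(4) by (simp add: mult.assoc)
      thus False using ne by blast
    next
      assume "t = 2*(3^f*b) \<and> n<3*t \<and> 9*t\<le>4*n"
      thus False using a(5) by linarith
    qed
  qed
  have d13: "T1 \<inter> T3 = {}"
  proof (rule ccontr)
    assume "T1 \<inter> T3 \<noteq> {}"
    then obtain t where t: "t \<in> T1" "t \<in> T3" by blast
    obtain a e where a: "a\<in>A" "1\<le>a" "2*a\<le>n" "t = 2*(3^e*a)"
      using fT1[OF t(1)] by blast
    obtain b f where b: "b\<in>A" "1\<le>b" "t = 3^Suc f*b"
      using fT3[OF t(2)] by blast
    have ne: "3^Suc f*b \<noteq> 2*3^e*a" by (rule L[OF P b(1) a(1) b(2) a(2)])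
    show False using a(4) b(3) ne by (simp add: mult.assoc)
  qed
  have d14: "T1 \<inter> A4 = {}"
  proof (rule ccontr)
    assume "T1 \<inter> A4 \<noteq> {}"
    then obtain t where t: "t \<in> T1" "t \<in> A4" by blast
    obtain a e where a: "a\<in>A" "1\<le>a" "2*a\<le>n" "t = 2*(3^e*a)"
      using fT1[OF t(1)] by blast
    have c: "t\<in>A" "n<2*t" using fA4[OF t(2)] by auto
    have "a dvd 2*t" using a(4) by simp
    moreover have "a < t" using a(3) c(2) by linarith
    ultimately show False using baseP[OF P a(1) c(1)] by blast
  qed
  have d23: "H \<inter> T3 = {}" using fH fT3 by fastforce
  have d24: "H \<inter> A4 = {}" using fH fA4 by fastforce
  have d34: "T3 \<inter> A4 = {}"
  proof (rule ccontr)
    assume "T3 \<inter> A4 \<noteq> {}"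
    then obtain t where t: "t \<in> T3" "t \<in> A4" by blast
    obtain b f where b: "b\<in>A" "1\<le>b" "2*b\<le>n" "t = 3^Suc f*b"
      using fT3[OF t(1)] by blast
    have c: "t\<in>A" "n<2*t" using fA4[OF t(2)] by auto
    have "b dvd 2*t" using b(4) by simp
    moreover have "b < t" using b(3) c(2) by linarith
    ultimately show False using baseP[OF P b(1) c(1)] by blast
  qed
  have cN: "card N = card T1 + card H + card T3 + card A4"
  proof -
    have "card (T1 \<union> H) = card T1 + card H" using fin_fT1 fin_fH d12 by (rule card_Un_disjoint)
    moreover have "card (T1 \<union> H \<union> T3) = card (T1 \<union> H) + card T3"
      using fin_fT1 fin_fH fin_fT3 d13 d23 by (intro card_Un_disjoint) auto
    moreover have "card (T1 \<union> H \<union> T3 \<union> A4) = card (T1 \<union> H \<union> T3) + card A4"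
      using fin_fT1 fin_fH fin_fT3 fin_fA4 d14 d24 d34 by (intro card_Un_disjoint) auto
    ultimately show ?thesis unfolding N_def by simp
  qed
  have cT1: "card T1 = card S1" unfolding T1_def by (rule card_image) (auto simp: inj_on_def)
  have cT3: "card T3 = card ZBn" unfolding T3_def
  proof (rule card_image, rule inj_onI)
    fix x y assume "x \<in> ZBn" "y \<in> ZBn" "9*x div 4 = 9*y div 4"
    moreover obtain k where "x = 4*k" using ZBmem[OF P \<open>x \<in> ZBn\<close>[unfolded ZBn_def]] by blast
    moreover obtain l where "y = 4*l" using ZBmem[OF P \<open>y \<in> ZBn\<close>[unfolded ZBn_def]] by blast
    ultimately show "x = y" by simp
  qed
  have cZ: "card S1 + card H = card Z"
  proof -
    have "Z = S1 \<union> H"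
    proof
      show "Z \<subseteq> S1 \<union> H"
      proof
        fix t assume t: "t \<in> Z"
        obtain a e where "(t = 3^e*a \<and> 2*n<9*t \<and> 2*t\<le>n) \<or> (t = 2*(3^e*a) \<and> n<3*t \<and> 9*t\<le>4*n)"
          using fZ[OF t] by blast
        hence "2*n<9*t \<and> 2*t\<le>n" by linarith
        thus "t \<in> S1 \<union> H" using t unfolding S1_def H_def by auto
      qed
    qed (auto simp: S1_def H_def)
    moreover have "S1 \<inter> H = {}" unfolding S1_def H_def by auto
    ultimately show ?thesis using card_Un_disjoint[OF fin_fS1 fin_fH] by simp
  qed
  have cD: "card Z = card D" unfolding ZD using hh_inj[OF P] unfolding D_def by (rule card_image)
  have cDA: "card D + card A4 = card {a \<in> A. 1 \<le> a \<and> 3*a \<le> 2*n}"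
  proof -
    have "{a \<in> A. 1 \<le> a \<and> 3*a \<le> 2*n} = D \<union> A4"
      using assms(1) unfolding D_def A4_def by auto
    moreover have "D \<inter> A4 = {}" unfolding D_def A4_def by auto
    moreover have "finite D" "finite A4" using fin_fD fin_fA4 .
    ultimately show ?thesis by (simp add: card_Un_disjoint)
  qed
  have i3: "card (B3 n A) = card {a \<in> A. 1 \<le> a \<and> real a \<le> 2 * real n / 3} + card (ZB n A)"
  proof -
    have "card (B3 n A) = card N" unfolding hB3 by (rule card_image) (simp add: inj_on_def)
    thus ?thesis unfolding r9 using cN cT1 cT3 cZ cD cDA unfolding ZBn_def by simp
  qed
  have i4: "B3 n A \<inter> real ` A3 n A = {}"
  proof (rule ccontr)
    assume "B3 n A \<inter> real ` A3 n A \<noteq> {}"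
    then obtain t m where t: "t \<in> N" "m \<in> A3 n A" "real t = real m" unfolding hB3 by blast
    hence tm: "t = m" by simp
    obtain x y where xy: "x \<in> A" "n < 2*x" "x \<le> n" "y \<in> A" "n < 2*y" "y \<le> n" "3*t = x+y"
      using t(2) unfolding A3_def Aupper_def r8 tm by blast
    have "\<exists>d\<in>A. d < x \<and> d < y \<and> d dvd 3*t"
    proof (cases "t \<in> A4")
      case True
      hence c: "t \<in> A" "n < 2*t" using fA4 by auto
      have "t < x" "t < y" using xy c by linarith+
      thus ?thesis using c by auto
    next
      case False
      hence "t \<in> T1 \<or> t \<in> H \<or> t \<in> T3" using t(1) unfolding N_def by blast
      hence "\<exists>d\<in>A. 2*d \<le> n \<and> d dvd t"
      proof (elim disjE)
        assume "t \<in> T1" thus ?thesis using fT1 by fastforce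
      next
        assume "t \<in> H"
        then obtain a e where a: "a\<in>A" "1\<le>a" "2*a\<le>n"
          "(t = 3^e*a \<and> 2*n<9*t \<and> 2*t\<le>n) \<or> (t = 2*(3^e*a) \<and> n<3*t \<and> 9*t\<le>4*n)"
          using fZ fH by blast
        have "a dvd t" using a(4) by auto
        thus ?thesis using a by blast
      next
        assume "t \<in> T3" thus ?thesis using fT3 by fastforce
      qed
      then obtain d where d: "d \<in> A" "2*d\<le>n" "d dvd t" by blast
      have "d < x" "d < y" using d(2) xy by linarith+
      thus ?thesis using d by auto
    qed
    then obtain d where d: "d\<in>A" "d < x" "d < y" "d dvd x + y" using xy(7) by auto
    thus False using P xy(1,4) unfolding propP_def by blast
  qed
  show ?thesis using i1 i2 i3 i4 by blast
qed

end
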